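(* In the setting below, for every $w\in W_M^Q$, \[ \mathrm{codim}(C_w)-\mathrm{codim}(C_w^M) = (\chi_w-\chi_w^M)(x_P). \]
   Context: $G=\mathrm{Sp}(2r)$ acting on $V=\mathbb{C}^{2r}$ with basis $e_1,\ldots,e_r,e_r',\ldots,e_1'$, symplectic form $(e_i,e_j')=\delta_{ij}$, $(e_i,e_j)=(e_i',e_j')=0$; $T$ diagonal torus $\mathrm{diag}(a_1,\ldots,a_r,a_r^{-1},\ldots,a_1^{-1})$ with characters $\epsilon_i$; positive roots $R^+$: $\epsilon_i-\epsilon_j$ ($i<j$), $\epsilon_i+\epsilon_j$ ($i\le j$); simple roots $\alpha_i=\epsilon_i-\epsilon_{i+1}$ ($i<r$), $\alpha_r=2\epsilon_r$; $x_1,\ldots,x_r\in\mathfrak{h}$ the basis dual to $\alpha_1,\ldots,\alpha_r$. Fix $1\le k\le s<r$; $M=C_G(\tau)\cong\mathrm{Sp}(2s)\times\mathrm{Sp}(2(r-s))$ with $\tau=\mathrm{diag}(-1,\ldots,-1,1,\ldots,1,-1,\ldots,-1)$ ($2(r-s)$ entries $1$); roots $R_M$ of $M$ are roots $\alpha$ of $G$ with $\alpha(\tau)=1$, $R_M^+=R_M\cap R^+$. $P$ is the maximal parabolic containing $B$ associated to $\alpha_P=\alpha_k$, $x_P=x_k$, $L$ its Levi containing $T$ with positive roots $R_L^+$, $Q=M\cap P$, $W_M^Q\subseteq W^P$ minimal coset representatives. $C_w=BwP/P\subseteq G/P$ and $C_w^M=(B\cap M)wQ/Q\subseteq M/Q$.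 $\chi_w=\sum_{\beta\in(R^+\setminus R^+_L)\cap w^{-1}R^+}\beta$ and $\chi^M_w$ is the same sum restricted to roots of $M$. *)

theory Defs
  imports Complex_Main
begin

text \<open>Weights (characters of the diagonal torus T of Sp(2r)) are encoded as
  functions nat => int: the character sum_i lambda(i) eps_i, indices 1..r;
  coordinates outside 1..r are irrelevant junk.\<close>

type_synonym weight = "nat \<Rightarrow> int"

definition eps :: "nat \<Rightarrow> weight" where
  "eps i = (\<lambda>j. if j = i then 1 else 0)"

definition restr :: "nat \<Rightarrow> weight \<Rightarrow> weight" where
  "restr r l = (\<lambda>j. if j \<in> {1..r} then l j else 0)"

definition dotp :: "nat \<Rightarrow> weight \<Rightarrow> weight \<Rightarrow> int" where
  "dotp r l m = (\<Sum>j\<in>{1..r}. l j * m j)"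

definition refl :: "nat \<Rightarrow> weight \<Rightarrow> weight \<Rightarrow> weight" where
  "refl r a l = (\<lambda>j. if j \<in> {1..r}
       then l j - (2 * dotp r l a div dotp r a a) * a j else 0)"

definition pos_roots :: "nat \<Rightarrow> weight set" where
  "pos_roots r = {(\<lambda>n. eps i n - eps j n) | i j. 1 \<le> i \<and> i < j \<and> j \<le> r}
               \<union> {(\<lambda>n. eps i n + eps j n) | i j. 1 \<le> i \<and> i \<le> j \<and> j \<le> r}"

definition neg_roots :: "nat \<Rightarrow> weight set" where
  "neg_roots r = (\<lambda>b n. - b n) ` pos_roots r"

definition alpha :: "nat \<Rightarrow> nat \<Rightarrow> weight" where
  "alpha r i = (if i < r then (\<lambda>n. eps i n - eps (Suc i) n) else (\<lambda>n. 2 * eps r n))"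

text \<open>As all groups involved
  are finite, the generated monoid is the generated group.\<close>
inductive_set gen_grp :: "nat \<Rightarrow> (weight \<Rightarrow> weight) set \<Rightarrow> (weight \<Rightarrow> weight) set"
  for r S where
  unit: "restr r \<in> gen_grp r S"
| step: "s \<in> S \<Longrightarrow> w \<in> gen_grp r S \<Longrightarrow> s \<circ> w \<in> gen_grp r S"

definition weylW :: "nat \<Rightarrow> (weight \<Rightarrow> weight) set" where
  "weylW r = gen_grp r {refl r (alpha r i) | i. 1 \<le> i \<and> i \<le> r}"

text \<open>Weyl group W_L of the Levi L of P (alpha_P = alpha_k): generated by
  the simple reflections s_i, i \<noteq> k.\<close>
definition weylL :: "nat \<Rightarrow> nat \<Rightarrow> (weight \<Rightarrow> weight) set" where
  "weylL r k = gen_grp r {refl r (alpha r i) | i. 1 \<le> i \<and> i \<le> r \<and> i \<noteq> k}"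

text \<open>The element x_k of h, dual to the simple roots: x_k(alpha_i) = delta_ik
  (for k < r), applied to a weight.\<close>
definition xP :: "nat \<Rightarrow> weight \<Rightarrow> int" where
  "xP k l = (\<Sum>j\<in>{1..k}. l j)"

text \<open>Evaluation of a character on the torus element diag(a_1..a_r, a_r^-1..a_1^-1).\<close>
definition torus_char :: "nat \<Rightarrow> (nat \<Rightarrow> complex) \<Rightarrow> weight \<Rightarrow> complex" where
  "torus_char r a l = (\<Prod>i\<in>{1..r}. a i powi l i)"

definition tau :: "nat \<Rightarrow> nat \<Rightarrow> complex" where
  "tau s i = (if i \<le> s then -1 else 1)"

definition pos_rootsM :: "nat \<Rightarrow> nat \<Rightarrow> weight set" where
  "pos_rootsM r s = {\<beta> \<in> pos_roots r. torus_char r (tau s) \<beta> = 1}"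

text \<open>R_L^+ : positive roots in the span of the simple roots other than alpha_k.\<close>
definition pos_rootsL :: "nat \<Rightarrow> nat \<Rightarrow> weight set" where
  "pos_rootsL r k = {\<beta> \<in> pos_roots r. xP k \<beta> = 0}"

text \<open>W_M = N_M(T)/T = stabiliser of tau in W (M = C_G(tau)).\<close>
definition weylM :: "nat \<Rightarrow> nat \<Rightarrow> (weight \<Rightarrow> weight) set" where
  "weylM r s = {w \<in> weylW r. \<forall>l. torus_char r (tau s) (w l) = torus_char r (tau s) l}"

text \<open>W_Q = Weyl group of the Levi L \<inter> M of Q = M \<inter> P.\<close>
definition weylQ :: "nat \<Rightarrow> nat \<Rightarrow> nat \<Rightarrow> (weight \<Rightarrow> weight) set" where
  "weylQ r s k = weylM r s \<inter> weylL r k"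

definition len :: "nat \<Rightarrow> (weight \<Rightarrow> weight) \<Rightarrow> nat" where
  "len r w = card {\<beta> \<in> pos_roots r. w \<beta> \<in> neg_roots r}"

definition lenM :: "nat \<Rightarrow> nat \<Rightarrow> (weight \<Rightarrow> weight) \<Rightarrow> nat" where
  "lenM r s w = card {\<beta> \<in> pos_rootsM r s. w \<beta> \<in> neg_roots r}"

definition weylMQ :: "nat \<Rightarrow> nat \<Rightarrow> nat \<Rightarrow> (weight \<Rightarrow> weight) set" where
  "weylMQ r s k = {w \<in> weylM r s. \<forall>v \<in> weylQ r s k. lenM r s w \<le> lenM r s (w \<circ> v)}"

text \<open>dim C_w = dim BwP/P = length of the minimal representative of w W_L;
  dim G/P = |R^+ - R_L^+|. Analogously for C_w^M in M/Q.\<close>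
definition dim_cell :: "nat \<Rightarrow> nat \<Rightarrow> (weight \<Rightarrow> weight) \<Rightarrow> nat" where
  "dim_cell r k w = (LEAST n. \<exists>v \<in> weylL r k. n = len r (w \<circ> v))"

definition codim_cell :: "nat \<Rightarrow> nat \<Rightarrow> (weight \<Rightarrow> weight) \<Rightarrow> nat" where
  "codim_cell r k w = card (pos_roots r - pos_rootsL r k) - dim_cell r k w"

definition dim_cellM :: "nat \<Rightarrow> nat \<Rightarrow> nat \<Rightarrow> (weight \<Rightarrow> weight) \<Rightarrow> nat" where
  "dim_cellM r s k w = (LEAST n. \<exists>v \<in> weylQ r s k. n = lenM r s (w \<circ> v))"

definition codim_cellM :: "nat \<Rightarrow> nat \<Rightarrow> nat \<Rightarrow> (weight \<Rightarrow> weight) \<Rightarrow> nat" where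
  "codim_cellM r s k w =
     card (pos_rootsM r s - pos_rootsL r k) - dim_cellM r s k w"

definition chi :: "nat \<Rightarrow> nat \<Rightarrow> (weight \<Rightarrow> weight) \<Rightarrow> weight" where
  "chi r k w = (\<lambda>j. \<Sum>\<beta> \<in> {\<beta> \<in> pos_roots r - pos_rootsL r k. w \<beta> \<in> pos_roots r}. \<beta> j)"

definition chiM :: "nat \<Rightarrow> nat \<Rightarrow> nat \<Rightarrow> (weight \<Rightarrow> weight) \<Rightarrow> weight" where
  "chiM r s k w = (\<lambda>j. \<Sum>\<beta> \<in> {\<beta> \<in> pos_rootsM r s - pos_rootsL r k. w \<beta> \<in> pos_roots r}. \<beta> j)"

lemma xP_alpha:
  assumes "k < r" "1 \<le> i" "i \<le> r"
  shows "xP k (alpha r i) = (if i = k then 1 else 0)"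
proof (cases "i < r")
  case True
  have "xP k (alpha r i) = (\<Sum>j\<in>{1..k}. eps i j) - (\<Sum>j\<in>{1..k}. eps (Suc i) j)"
    using True by (simp add: xP_def alpha_def sum_subtractf)
  also have "\<dots> = (if i \<le> k then 1 else 0) - (if Suc i \<le> k then 1 else 0)"
    using assms by (simp add: eps_def)
  finally show ?thesis by auto
next
  case False
  then show ?thesis using assms by (simp add: xP_def alpha_def eps_def)
qed

end

theory Submission
  imports Defs
begin

lemma sum_eps[simp]: "finite A \<Longrightarrow> (\<Sum>j\<in>A. l j * eps a j) = (if a \<in> A then l a else 0)"
proof -
  assume f: "finite A"
  have "(\<lambda>j. l j * eps a j) = (\<lambda>j. if j = a then l a else 0)" by (auto simp: eps_def fun_eq_iff)
  then have "(\<Sum>j\<in>A. l j * eps a j) = (\<Sum>j\<in>A. if j = a then l a else 0)" by metis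
  also have "\<dots> = (if a \<in> A then l a else 0)" using f by (rule sum.delta)
  finally show ?thesis .
qed

lemma dotp_eps: "a \<in> {1..r} \<Longrightarrow> dotp r l (eps a) = l a"
  by (simp add: dotp_def sum_eps)

lemma refl_lt: assumes "1 \<le> i" "i < r"
  shows "refl r (alpha r i) l = (\<lambda>j. if j \<in> {1..r} then (if j = i then l (Suc i) else if j = Suc i then l i else l j) else 0)"
proof -
  have d1: "\<And>l. dotp r l (alpha r i) = l i - l (Suc i)"
    using assms by (simp add: alpha_def dotp_def right_diff_distrib sum_subtractf sum_eps)
  have d2: "dotp r (alpha r i) (alpha r i) = 2"
    using assms unfolding d1 by (simp add: alpha_def eps_def)
  show ?thesis using assms unfolding refl_def d1 d2 by (auto simp: alpha_def eps_def fun_eq_iff)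
qed

lemma refl_r: assumes "1 \<le> r"
  shows "refl r (alpha r r) l = (\<lambda>j. if j \<in> {1..r} then (if j = r then - l r else l j) else 0)"
proof -
  have d1: "dotp r l (alpha r r) = 2 * l r"
  proof -
    have "dotp r l (alpha r r) = (\<Sum>j\<in>{1..r}. 2 * (l j * eps r j))"
      by (simp add: alpha_def dotp_def algebra_simps)
    also have "\<dots> = 2 * l r" using assms by (simp add: sum_distrib_left[symmetric] sum_eps)
    finally show ?thesis .
  qed
  have d2: "dotp r (alpha r r) (alpha r r) = 4"
  proof -
    have "dotp r (alpha r r) (alpha r r) = (\<Sum>j\<in>{1..r}. 4 * (eps r j * eps r j))"
      by (simp add: alpha_def dotp_def algebra_simps)
    also have "\<dots> = 4" using assms by (simp add: sum_distrib_left[symmetric] sum_eps) (simp add: eps_def)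
    finally show ?thesis .
  qed
  show ?thesis using assms unfolding refl_def d1 d2 by (auto simp: alpha_def eps_def fun_eq_iff)
qed


definition rt :: "int \<Rightarrow> nat \<Rightarrow> int \<Rightarrow> nat \<Rightarrow> weight" where
  "rt c x d y = (\<lambda>n. c * eps x n + d * eps y n)"

definition SP :: "nat \<Rightarrow> (weight \<Rightarrow> weight) \<Rightarrow> (nat \<Rightarrow> nat) \<Rightarrow> (nat \<Rightarrow> int) \<Rightarrow> bool" where
  "SP r w \<rho> c \<longleftrightarrow> (\<forall>f g. w (\<lambda>n. f n + g n) = (\<lambda>n. w f n + w g n))
     \<and> (\<forall>x f. w (\<lambda>n. x * f n) = (\<lambda>n. x * w f n))
     \<and> (\<forall>f. w f = w (restr r f)) \<and> (\<forall>f. restr r (w f) = w f)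
     \<and> \<rho> ` {1..r} \<subseteq> {1..r} \<and> inj_on \<rho> {1..r}
     \<and> (\<forall>a\<in>{1..r}. (c a = 1 \<or> c a = -1) \<and> w (eps a) = (\<lambda>n. c a * eps (\<rho> a) n))"

lemma SP_restr: "SP r (restr r) id (\<lambda>_. 1)"
  unfolding SP_def by (auto simp: restr_def fun_eq_iff eps_def)

lemma SP_D:
  assumes "SP r w \<rho> c"
  shows "\<forall>f g. w (\<lambda>n. f n + g n) = (\<lambda>n. w f n + w g n)"
     and "\<forall>x f. w (\<lambda>n. x * f n) = (\<lambda>n. x * w f n)"
     and "\<forall>f. w f = w (restr r f)" and "\<forall>f. restr r (w f) = w f"
     and "\<rho> ` {1..r} \<subseteq> {1..r}" and "inj_on \<rho> {1..r}"
     and "\<forall>a\<in>{1..r}. (c a = 1 \<or> c a = -1) \<and> w (eps a) = (\<lambda>n. c a * eps (\<rho> a) n)"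
  using assms unfolding SP_def by - ((elim conjE, assumption)+)

lemma SP_comp:
  assumes "SP r s \<rho>1 c1" "SP r w \<rho>2 c2"
  shows "SP r (s \<circ> w) (\<rho>1 \<circ> \<rho>2) (\<lambda>a. c2 a * c1 (\<rho>2 a))"
proof -
  note s1 = SP_D(1)[OF assms(1)]
  note s2 = SP_D(2)[OF assms(1)]
  note s3 = SP_D(3)[OF assms(1)]
  note s4 = SP_D(4)[OF assms(1)]
  note s5 = SP_D(5)[OF assms(1)]
  note s6 = SP_D(6)[OF assms(1)]
  note s7 = SP_D(7)[OF assms(1)]
  note w1 = SP_D(1)[OF assms(2)]
  note w2 = SP_D(2)[OF assms(2)]
  note w3 = SP_D(3)[OF assms(2)]
  note w4 = SP_D(4)[OF assms(2)]
  note w5 = SP_D(5)[OF assms(2)]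
  note w6 = SP_D(6)[OF assms(2)]
  note w7 = SP_D(7)[OF assms(2)]
  have "\<forall>a\<in>{1..r}. ((c2 a * c1 (\<rho>2 a)) = 1 \<or> (c2 a * c1 (\<rho>2 a)) = -1) \<and> (s \<circ> w) (eps a) = (\<lambda>n. (c2 a * c1 (\<rho>2 a)) * eps ((\<rho>1 \<circ> \<rho>2) a) n)"
  proof
    fix a assume a: "a \<in> {1..r}"
    then have r2: "\<rho>2 a \<in> {1..r}" using w5 by blast
    have "(s \<circ> w) (eps a) = s (\<lambda>n. c2 a * eps (\<rho>2 a) n)" using w7 a by simp
    also have "\<dots> = (\<lambda>n. c2 a * s (eps (\<rho>2 a)) n)" by (rule s2[rule_format])
    also have "\<dots> = (\<lambda>n. (c2 a * c1 (\<rho>2 a)) * eps ((\<rho>1 \<circ> \<rho>2) a) n)"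
      using s7 r2 by (simp add: mult.assoc)
    finally show "((c2 a * c1 (\<rho>2 a)) = 1 \<or> (c2 a * c1 (\<rho>2 a)) = -1) \<and> (s \<circ> w) (eps a) = (\<lambda>n. (c2 a * c1 (\<rho>2 a)) * eps ((\<rho>1 \<circ> \<rho>2) a) n)"
      using s7 w7 a r2 by fastforce
  qed
  moreover have "(\<rho>1 \<circ> \<rho>2) ` {1..r} \<subseteq> {1..r}" using s5 w5 by (auto simp: image_subset_iff)
  moreover have "inj_on (\<rho>1 \<circ> \<rho>2) {1..r}" using s6 w6 w5 by (auto intro: comp_inj_on inj_on_subset)
  moreover have "\<forall>f g. (s \<circ> w) (\<lambda>n. f n + g n) = (\<lambda>n. (s \<circ> w) f n + (s \<circ> w) g n)"
  proof (intro allI)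
    fix f g :: weight
    have "(s \<circ> w) (\<lambda>n. f n + g n) = s (\<lambda>n. w f n + w g n)" using w1 by simp
    also have "\<dots> = (\<lambda>n. s (w f) n + s (w g) n)" by (rule s1[rule_format])
    finally show "(s \<circ> w) (\<lambda>n. f n + g n) = (\<lambda>n. (s \<circ> w) f n + (s \<circ> w) g n)" by simp
  qed
  moreover have "\<forall>x f. (s \<circ> w) (\<lambda>n. x * f n) = (\<lambda>n. x * (s \<circ> w) f n)"
  proof (intro allI)
    fix x and f :: weight
    have "(s \<circ> w) (\<lambda>n. x * f n) = s (\<lambda>n. x * w f n)" using w2 by simp
    also have "\<dots> = (\<lambda>n. x * s (w f) n)" by (rule s2[rule_format])
    finally show "(s \<circ> w) (\<lambda>n. x * f n) = (\<lambda>n. x * (s \<circ> w) f n)" by simp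
  qed
  moreover have "\<forall>f. (s \<circ> w) f = (s \<circ> w) (restr r f)" using w3 by (simp only: o_apply) metis
  moreover have "\<forall>f. restr r ((s \<circ> w) f) = (s \<circ> w) f" using s4 by (simp only: o_apply) metis
  ultimately show ?thesis unfolding SP_def by blast
qed

lemma SP_gen:
  assumes "\<forall>s\<in>S. \<exists>\<rho> c. SP r s \<rho> c" "w \<in> gen_grp r S"
  shows "\<exists>\<rho> c. SP r w \<rho> c"
  using assms(2)
proof induction
  case unit
  then show ?case using SP_restr by blast
next
  case (step s w)
  then show ?case using assms(1) SP_comp by blast
qed

lemma SP_of:
  assumes w: "\<And>l. w l = (\<lambda>j. if j \<in> {1..r} then d j * l (\<pi> j) else 0)"
    and p: "\<And>j. j \<in> {1..r} \<Longrightarrow> \<pi> j \<in> {1..r} \<and> \<pi> (\<pi> j) = j"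
    and d: "\<And>j. j \<in> {1..r} \<Longrightarrow> d j = 1 \<or> d j = -1"
  shows "SP r w \<pi> (\<lambda>a. d (\<pi> a))"
proof -
  have img: "\<pi> ` {1..r} \<subseteq> {1..r}" using p by blast
  have inj: "inj_on \<pi> {1..r}" by (rule inj_on_inverseI[where g=\<pi>]) (use p in blast)
  have e: "w (eps a) = (\<lambda>n. d (\<pi> a) * eps (\<pi> a) n)" if a: "a \<in> {1..r}" for a
  proof
    fix n
    show "w (eps a) n = d (\<pi> a) * eps (\<pi> a) n"
    proof (cases "n \<in> {1..r}")
      case True
      then have "(\<pi> n = a) = (n = \<pi> a)" using p a by metis
      then show ?thesis using True by (simp add: w eps_def)
    next
      case False
      then have "n \<noteq> \<pi> a" using p a by blast
      then show ?thesis using False by (auto simp: w eps_def)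
    qed
  qed
  have 1: "\<forall>f g. w (\<lambda>n. f n + g n) = (\<lambda>n. w f n + w g n)" by (simp add: w fun_eq_iff algebra_simps)
  have 2: "\<forall>x f. w (\<lambda>n. x * f n) = (\<lambda>n. x * w f n)" by (simp add: w fun_eq_iff algebra_simps)
  have 3: "\<forall>f. w f = w (restr r f)" using p by (simp add: w restr_def fun_eq_iff)
  have 4: "\<forall>f. restr r (w f) = w f" by (simp add: w restr_def fun_eq_iff)
  have 5: "\<forall>a\<in>{1..r}. (d (\<pi> a) = 1 \<or> d (\<pi> a) = -1) \<and> w (eps a) = (\<lambda>n. d (\<pi> a) * eps (\<pi> a) n)"
  proof
    fix a assume a: "a \<in> {1..r}"
    then have "\<pi> a \<in> {1..r}" using p by blast
    then show "(d (\<pi> a) = 1 \<or> d (\<pi> a) = -1) \<and> w (eps a) = (\<lambda>n. d (\<pi> a) * eps (\<pi> a) n)"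
      using e[OF a] d by simp
  qed
  show ?thesis unfolding SP_def using 1 2 3 4 5 img inj by (intro conjI)
qed

definition swp :: "nat \<Rightarrow> nat \<Rightarrow> nat" where
  "swp i j = (if j = i then Suc i else if j = Suc i then i else j)"

definition tflip :: "nat \<Rightarrow> nat \<Rightarrow> weight \<Rightarrow> weight" where
  "tflip r m l = (\<lambda>j. if j \<in> {1..r} then (if j = m then - l j else l j) else 0)"

lemma refl_lt': assumes "1 \<le> i" "i < r"
  shows "refl r (alpha r i) l = (\<lambda>j. if j \<in> {1..r} then 1 * l (swp i j) else 0)"
  unfolding refl_lt[OF assms] by (auto simp: swp_def fun_eq_iff)

lemma refl_r': assumes "1 \<le> r"
  shows "refl r (alpha r r) = tflip r r"
  unfolding refl_r[OF assms] tflip_def by (auto simp: fun_eq_iff)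

lemma tflip': "tflip r m l = (\<lambda>j. if j \<in> {1..r} then (if j = m then -1 else 1) * l (id j) else 0)"
  unfolding tflip_def by (auto simp: fun_eq_iff)

lemma SP_swp: assumes "1 \<le> i" "i < r"
  shows "SP r (refl r (alpha r i)) (swp i) (\<lambda>_. 1)"
proof -
  have p: "\<And>j. j \<in> {1..r} \<Longrightarrow> swp i j \<in> {1..r} \<and> swp i (swp i j) = j"
    using assms unfolding swp_def by (cases "j = i"; cases "j = Suc i") auto
  have d: "\<And>j. j \<in> {1..r} \<Longrightarrow> (1::int) = 1 \<or> (1::int) = -1" by simp
  show ?thesis using SP_of[where w="refl r (alpha r i)" and d="\<lambda>_. 1" and \<pi>="swp i", OF refl_lt'[OF assms] p d] .
qed

lemma SP_tflip: assumes "m \<in> {1..r}"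
  shows "SP r (tflip r m) id (\<lambda>a. if a = m then -1 else 1)"
proof -
  have p: "\<And>j. j \<in> {1..r} \<Longrightarrow> id j \<in> {1..r} \<and> id (id j) = j" by simp
  have d: "\<And>j. j \<in> {1..r} \<Longrightarrow> (if j = m then -1 else 1::int) = 1 \<or> (if j = m then -1 else 1::int) = -1" by simp
  have "SP r (tflip r m) id (\<lambda>a. if id a = m then -1 else 1)"
    by (rule SP_of[where w="tflip r m" and d="\<lambda>j. if j = m then -1 else 1" and \<pi>=id, OF tflip' p d])
  then show ?thesis by (simp only: id_apply)
qed

lemma SP_gens: assumes "s \<in> {refl r (alpha r i) | i. 1 \<le> i \<and> i \<le> r}"
  shows "\<exists>\<rho> c. SP r s \<rho> c"
proof -
  obtain i where i: "s = refl r (alpha r i)" "1 \<le> i" "i \<le> r" using assms by blast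
  show ?thesis
  proof (cases "i < r")
    case True
    have "SP r s (swp i) (\<lambda>_. 1)" unfolding i(1) by (rule SP_swp[OF i(2) True])
    then show ?thesis by blast
  next
    case False
    then have "i = r" using i by simp
    have "SP r s id (\<lambda>a. if a = r then -1 else 1)"
      unfolding i(1) \<open>i = r\<close> refl_r'[OF order.trans[OF i(2,3)]] by (rule SP_tflip) (use i in auto)
    then show ?thesis by blast
  qed
qed

lemma SP_weylW: assumes "w \<in> gen_grp r S" "S \<subseteq> {refl r (alpha r i) | i. 1 \<le> i \<and> i \<le> r}"
  shows "\<exists>\<rho> c. SP r w \<rho> c"
proof (rule SP_gen[OF _ assms(1)])
  show "\<forall>s\<in>S. \<exists>\<rho> c. SP r s \<rho> c"
  proof
    fix s assume "s \<in> S"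
    then have "s \<in> {refl r (alpha r i) | i. 1 \<le> i \<and> i \<le> r}" using assms(2) by (rule subsetD[rotated])
    then show "\<exists>\<rho> c. SP r s \<rho> c" by (rule SP_gens)
  qed
qed

definition hh :: "nat \<Rightarrow> weight \<Rightarrow> int" where
  "hh r b = (\<Sum>j\<in>{1..r}. int (Suc r - j) * b j)"

lemma hh_rt: assumes "x \<in> {1..r}" "y \<in> {1..r}"
  shows "hh r (rt c x d y) = c * int (Suc r - x) + d * int (Suc r - y)"
proof -
  have "hh r (rt c x d y) = (\<Sum>j\<in>{1..r}. c * (int (Suc r - j) * eps x j) + d * (int (Suc r - j) * eps y j))"
    unfolding hh_def rt_def by (simp add: algebra_simps)
  also have "\<dots> = c * (\<Sum>j\<in>{1..r}. int (Suc r - j) * eps x j) + d * (\<Sum>j\<in>{1..r}. int (Suc r - j) * eps y j)"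
    by (simp only: sum.distrib sum_distrib_left)
  also have "\<dots> = c * int (Suc r - x) + d * int (Suc r - y)"
    using assms by (simp only: sum_eps finite_atLeastAtMost if_True)
  finally show ?thesis .
qed

lemma hh_neg: "hh r (\<lambda>n. - b n) = - hh r b"
  unfolding hh_def by (simp add: sum_negf)

lemma rt_neg: "(\<lambda>n. - rt c x d y n) = rt (-c) x (-d) y"
  unfolding rt_def by (simp add: fun_eq_iff)

lemma rt_comm: "rt c x d y = rt d y c x"
  unfolding rt_def by (simp add: fun_eq_iff)

lemma pos_roots_alt: "pos_roots r = {rt 1 i (-1) j | i j. 1 \<le> i \<and> i < j \<and> j \<le> r} \<union> {rt 1 i 1 j | i j. 1 \<le> i \<and> i \<le> j \<and> j \<le> r}"
proof -
  have "\<And>i j. (\<lambda>n. eps i n - eps j n) = rt 1 i (-1) j" "\<And>i j. (\<lambda>n. eps i n + eps j n) = rt 1 i 1 j"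
    unfolding rt_def by (simp_all add: fun_eq_iff)
  then show ?thesis unfolding pos_roots_def by simp
qed

lemma pos_cases:
  assumes "b \<in> pos_roots r"
  obtains a e c where "1 \<le> a" "a \<le> c" "c \<le> r" "e = 1 \<or> (e = -1 \<and> a < c)" "b = rt 1 a e c"
proof -
  from assms consider (m) i j where "1 \<le> i" "i < j" "j \<le> r" "b = rt 1 i (-1) j"
    | (p) i j where "1 \<le> i" "i \<le> j" "j \<le> r" "b = rt 1 i 1 j"
    unfolding pos_roots_alt by blast
  then show ?thesis
  proof cases
    case m then show ?thesis by (intro that[of i j "-1"]) auto
  next
    case p then show ?thesis by (intro that[of i j 1]) auto
  qed
qed

lemma pos_hh: assumes "b \<in> pos_roots r" shows "hh r b > 0"
proof -
  obtain a e c where h: "1 \<le> a" "a \<le> c" "c \<le> r" "e = 1 \<or> (e = -1 \<and> a < c)" "b = rt 1 a e c"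
    by (rule pos_cases[OF assms])
  then have "hh r b = int (Suc r - a) + e * int (Suc r - c)" using hh_rt[of a r c 1 e] by auto
  moreover have "int (Suc r - a) + e * int (Suc r - c) > 0" using h(1-4) by (elim disjE conjE) (simp_all add: of_nat_diff)
  ultimately show ?thesis by simp
qed

lemma neg_hh: assumes "b \<in> neg_roots r" shows "hh r b < 0"
proof -
  obtain b' where "b' \<in> pos_roots r" "b = (\<lambda>n. - b' n)" using assms unfolding neg_roots_def by blast
  then show ?thesis using pos_hh[of b' r] hh_neg[of r b'] by simp
qed

lemma pos_neg_disj: "b \<in> pos_roots r \<Longrightarrow> b \<notin> neg_roots r"
  using pos_hh neg_hh by fastforce

lemma finite_pos: "finite (pos_roots r)"
proof -
  have "pos_roots r \<subseteq> (\<lambda>(i, e, j). rt 1 i e j) ` ({1..r} \<times> {-1,1} \<times> {1..r})"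
  proof
    fix b assume "b \<in> pos_roots r"
    then obtain a e c where "1 \<le> a" "a \<le> c" "c \<le> r" "e = 1 \<or> (e = -1 \<and> a < c)" "b = rt 1 a e c"
      by (rule pos_cases)
    then show "b \<in> (\<lambda>(i, e, j). rt 1 i e j) ` ({1..r} \<times> {-1,1} \<times> {1..r})"
      by (intro image_eqI[where x="(a,e,c)"]) auto
  qed
  then show ?thesis by (rule finite_subset) auto
qed

lemma negI: "b \<in> pos_roots r \<Longrightarrow> (\<lambda>n. - b n) \<in> neg_roots r"
  unfolding neg_roots_def by blast

lemma RS:
  assumes x: "x \<in> {1..r}" and y: "y \<in> {1..r}" and c: "c = 1 \<or> c = -1" and d: "d = 1 \<or> d = -1"
    and xy: "x \<noteq> y \<or> c = d"
  shows "rt c x d y \<in> pos_roots r \<or> rt c x d y \<in> neg_roots r"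
proof -
  have P1: "rt 1 i (-1) j \<in> pos_roots r" if "1 \<le> i" "i < j" "j \<le> r" for i j
    unfolding pos_roots_alt using that by blast
  have P2: "rt 1 i 1 j \<in> pos_roots r" if "1 \<le> i" "i \<le> j" "j \<le> r" for i j
    unfolding pos_roots_alt using that by blast
  have P2': "rt 1 i 1 j \<in> pos_roots r" if "i \<in> {1..r}" "j \<in> {1..r}" for i j
  proof (cases "i \<le> j")
    case True then show ?thesis using P2 that by auto
  next
    case False then show ?thesis using P2[of j i] that rt_comm by auto
  qed
  have P1': "rt 1 i (-1) j \<in> pos_roots r \<or> rt 1 i (-1) j \<in> neg_roots r" if "i \<in> {1..r}" "j \<in> {1..r}" "i \<noteq> j" for i j
  proof (cases "i < j")
    case True then show ?thesis using P1 that by auto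
  next
    case False
    then have "rt 1 j (-1) i \<in> pos_roots r" using P1 that by auto
    then have "(\<lambda>n. - rt 1 j (-1) i n) \<in> neg_roots r" by (rule negI)
    then show ?thesis unfolding rt_neg by (simp add: rt_comm)
  qed
  show ?thesis
  proof (cases "c = 1")
    case c1: True
    show ?thesis
    proof (cases "d = 1")
      case True then show ?thesis using c1 P2' x y by simp
    next
      case False then have "d = -1" using d by simp
      then show ?thesis using c1 P1' x y xy by simp
    qed
  next
    case c2: False
    then have cm: "c = -1" using c by simp
    show ?thesis
    proof (cases "d = 1")
      case True then show ?thesis using cm P1'[of y x] x y xy rt_comm[of c x d y] by simp
    next
      case False then have dm: "d = -1" using d by simp
      have "(\<lambda>n. - rt 1 x 1 y n) \<in> neg_roots r" using P2' x y by (intro negI)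
      then show ?thesis unfolding rt_neg using cm dm by simp
    qed
  qed
qed

lemma root_iff:
  assumes x: "x \<in> {1..r}" and y: "y \<in> {1..r}" and c: "c = 1 \<or> c = -1" and d: "d = 1 \<or> d = -1"
    and xy: "x \<noteq> y \<or> c = d"
  shows "rt c x d y \<in> pos_roots r \<longleftrightarrow> hh r (rt c x d y) > 0"
    and "rt c x d y \<in> neg_roots r \<longleftrightarrow> hh r (rt c x d y) < 0"
proof -
  have "hh r (rt c x d y) > 0" if "rt c x d y \<in> pos_roots r" using pos_hh[OF that] .
  moreover have "hh r (rt c x d y) < 0" if "rt c x d y \<in> neg_roots r" using neg_hh[OF that] .
  ultimately show "rt c x d y \<in> pos_roots r \<longleftrightarrow> hh r (rt c x d y) > 0"
    and "rt c x d y \<in> neg_roots r \<longleftrightarrow> hh r (rt c x d y) < 0"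
    using RS[OF assms] by linarith+
qed

lemma SP_rt: assumes "SP r w \<rho> c" "x \<in> {1..r}" "y \<in> {1..r}"
  shows "w (rt c1 x d1 y) = rt (c1 * c x) (\<rho> x) (d1 * c y) (\<rho> y)"
proof -
  note w1 = SP_D(1)[OF assms(1)] and w2 = SP_D(2)[OF assms(1)] and w7 = SP_D(7)[OF assms(1)]
  have "w (rt c1 x d1 y) = w (\<lambda>n. (\<lambda>n. c1 * eps x n) n + (\<lambda>n. d1 * eps y n) n)" unfolding rt_def by simp
  also have "\<dots> = (\<lambda>n. w (\<lambda>n. c1 * eps x n) n + w (\<lambda>n. d1 * eps y n) n)" by (rule w1[rule_format])
  also have "\<dots> = (\<lambda>n. c1 * w (eps x) n + d1 * w (eps y) n)"
    using w2[rule_format, of c1 "eps x"] w2[rule_format, of d1 "eps y"] by simp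
  also have "\<dots> = rt (c1 * c x) (\<rho> x) (d1 * c y) (\<rho> y)"
    using w7 assms(2,3) unfolding rt_def by (simp add: fun_eq_iff mult.assoc)
  finally show ?thesis .
qed

definition Hv :: "nat \<Rightarrow> (nat \<Rightarrow> nat) \<Rightarrow> (nat \<Rightarrow> int) \<Rightarrow> nat \<Rightarrow> int" where
  "Hv r \<rho> c a = c a * int (Suc r - \<rho> a)"

lemma SP_img:
  assumes w: "SP r w \<rho> c" and h: "1 \<le> a" "a \<le> b" "b \<le> r" "e = 1 \<or> (e = -1 \<and> a < b)"
  shows "w (rt 1 a e b) \<in> pos_roots r \<longleftrightarrow> Hv r \<rho> c a + e * Hv r \<rho> c b > 0"
    and "w (rt 1 a e b) \<in> neg_roots r \<longleftrightarrow> Hv r \<rho> c a + e * Hv r \<rho> c b < 0"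
    and "w (rt 1 a e b) \<in> pos_roots r \<or> w (rt 1 a e b) \<in> neg_roots r"
proof -
  have a: "a \<in> {1..r}" and b: "b \<in> {1..r}" using h by auto
  note w5 = SP_D(5)[OF w] and w6 = SP_D(6)[OF w] and w7 = SP_D(7)[OF w]
  have ra: "\<rho> a \<in> {1..r}" and rb: "\<rho> b \<in> {1..r}" using w5 a b by blast+
  have ca: "c a = 1 \<or> c a = -1" and cb: "c b = 1 \<or> c b = -1" using w7 a b by auto
  have eq: "w (rt 1 a e b) = rt (c a) (\<rho> a) (e * c b) (\<rho> b)" using SP_rt[OF w a b] by simp
  have cc: "c a = 1 \<or> c a = -1" "e * c b = 1 \<or> e * c b = -1" using ca cb h(4) by auto
  have ne: "\<rho> a \<noteq> \<rho> b \<or> c a = e * c b"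
  proof (cases "a = b")
    case True then show ?thesis using h(4) by auto
  next
    case False then show ?thesis using w6 a b by (auto dest: inj_onD)
  qed
  have hv: "hh r (rt (c a) (\<rho> a) (e * c b) (\<rho> b)) = Hv r \<rho> c a + e * Hv r \<rho> c b"
    using hh_rt[OF ra rb] by (simp add: Hv_def)
  show "w (rt 1 a e b) \<in> pos_roots r \<longleftrightarrow> Hv r \<rho> c a + e * Hv r \<rho> c b > 0"
    using root_iff(1)[OF ra rb cc ne] unfolding eq hv .
  show "w (rt 1 a e b) \<in> neg_roots r \<longleftrightarrow> Hv r \<rho> c a + e * Hv r \<rho> c b < 0"
    using root_iff(2)[OF ra rb cc ne] unfolding eq hv .
  show "w (rt 1 a e b) \<in> pos_roots r \<or> w (rt 1 a e b) \<in> neg_roots r"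
    using RS[OF ra rb cc ne] unfolding eq .
qed

lemma SP_pn: assumes "SP r w \<rho> c" "b \<in> pos_roots r"
  shows "w b \<in> pos_roots r \<or> w b \<in> neg_roots r"
proof -
  obtain a e c' where h: "1 \<le> a" "a \<le> c'" "c' \<le> r" "e = 1 \<or> (e = -1 \<and> a < c')" "b = rt 1 a e c'"
    by (rule pos_cases[OF assms(2)])
  show ?thesis unfolding h(5) by (rule SP_img(3)[OF assms(1) h(1-4)])
qed

lemma sum_eps1: "finite A \<Longrightarrow> (\<Sum>j\<in>A. eps a j) = (if a \<in> A then 1 else 0)"
  using sum_eps[of A "\<lambda>_. 1" a] by simp

lemma xP_rt: "xP m (rt c x d y) = c * (if x \<in> {1..m} then 1 else 0) + d * (if y \<in> {1..m} then 1 else 0)"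
  unfolding xP_def rt_def by (simp only: sum.distrib sum_distrib_left[symmetric] sum_eps1 finite_atLeastAtMost)

lemma xP_eps: "xP m (eps x) = (if x \<in> {1..m} then 1 else 0)"
  unfolding xP_def by (simp only: sum_eps1 finite_atLeastAtMost)

lemma xP_scal: "xP m (\<lambda>n. c * f n) = c * xP m f"
  unfolding xP_def by (simp add: sum_distrib_left)

lemma prod_m1: "finite A \<Longrightarrow> (\<Prod>i\<in>A. (-1::complex) powi f i) = (-1) powi (\<Sum>i\<in>A. f i)"
proof (induction A rule: finite_induct)
  case empty then show ?case by simp
next
  case (insert x F) then show ?case by (simp add: power_int_add)
qed

lemma m1_powi: "(-1::complex) powi n = (if even n then 1 else -1)"
  by (simp add: power_int_minus_left)

lemma torus_xP: assumes "s \<le> r"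
  shows "torus_char r (tau s) l = (if even (xP s l) then 1 else -1)"
proof -
  have "torus_char r (tau s) l = (\<Prod>i\<in>{1..r}. if i \<le> s then (-1::complex) powi l i else 1)"
    unfolding torus_char_def tau_def by (rule prod.cong) auto
  also have "\<dots> = (\<Prod>i\<in>{i\<in>{1..r}. i \<le> s}. (-1::complex) powi l i)"
    by (rule prod.inter_filter[symmetric]) simp
  also have "{i\<in>{1..r}. i \<le> s} = {1..s}" using assms by auto
  also have "(\<Prod>i\<in>{1..s}. (-1::complex) powi l i) = (-1) powi (xP s l)"
    unfolding xP_def by (rule prod_m1) simp
  finally show ?thesis by (simp add: m1_powi)
qed

lemma posM_iff: assumes "s \<le> r"
  shows "b \<in> pos_rootsM r s \<longleftrightarrow> b \<in> pos_roots r \<and> even (xP s b)"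
  unfolding pos_rootsM_def torus_xP[OF assms] by simp

lemma weylM_par: assumes "s \<le> r" "w \<in> weylM r s"
  shows "even (xP s (w l)) = even (xP s l)"
proof -
  have "torus_char r (tau s) (w l) = torus_char r (tau s) l" using assms(2) unfolding weylM_def by blast
  then show ?thesis unfolding torus_xP[OF assms(1)] by (simp split: if_splits)
qed

lemma weylM_I: assumes "s \<le> r" "w \<in> weylW r" "\<And>l. even (xP s (w l)) = even (xP s l)"
  shows "w \<in> weylM r s"
  unfolding weylM_def torus_xP[OF assms(1)] using assms(2,3) by simp

lemma block: assumes "s \<le> r" "w \<in> weylM r s" "SP r w \<rho> c" "a \<in> {1..r}"
  shows "\<rho> a \<le> s \<longleftrightarrow> a \<le> s"
proof -
  note w5 = SP_D(5)[OF assms(3)] and w7 = SP_D(7)[OF assms(3)]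
  have "\<rho> a \<in> {1..r}" using w5 assms(4) by blast
  then have ra: "\<rho> a \<ge> 1" by simp
  have ca: "c a = 1 \<or> c a = -1" and we: "w (eps a) = (\<lambda>n. c a * eps (\<rho> a) n)" using w7 assms(4) by auto
  have "even (xP s (w (eps a))) = even (xP s (eps a))" by (rule weylM_par[OF assms(1,2)])
  then have "even (c a * (if \<rho> a \<in> {1..s} then 1 else 0)) = even (if a \<in> {1..s} then 1 else (0::int))"
    unfolding we xP_scal xP_eps .
  then show ?thesis using ca ra assms(4) by (auto split: if_splits)
qed

lemma dotp_restr: "dotp r (restr r l) a = dotp r l a"
  unfolding dotp_def restr_def by (rule sum.cong) auto

lemma refl_restr_in: "refl r a (restr r l) = refl r a l"
  unfolding refl_def dotp_restr by (auto simp: restr_def fun_eq_iff)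

lemma refl_restr_out: "restr r (refl r a l) = refl r a l"
  unfolding refl_def by (auto simp: restr_def fun_eq_iff)

lemma gen_restr: assumes "\<forall>s\<in>S. \<forall>l. restr r (s l) = s l" "u \<in> gen_grp r S"
  shows "restr r (u l) = u l"
  using assms(2)
proof induction
  case unit then show ?case by (simp add: restr_def fun_eq_iff)
next
  case (step s w) then show ?case using assms(1) by simp
qed

lemma gen_comp: assumes "\<forall>s\<in>S. \<forall>l. restr r (s l) = s l" "w \<in> gen_grp r S" "u \<in> gen_grp r S"
  shows "w \<circ> u \<in> gen_grp r S"
  using assms(2)
proof induction
  case unit
  have "restr r \<circ> u = u" using gen_restr[OF assms(1,3)] by (simp add: fun_eq_iff)
  then show ?case using assms(3) by simp
next
  case (step s w)
  have "s \<circ> (w \<circ> u) \<in> gen_grp r S" by (rule gen_grp.step[OF step.hyps(1) step.IH])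
  then show ?case by (simp only: o_assoc)
qed

lemma gen_in: assumes "s \<in> S" "\<forall>l. s (restr r l) = s l" shows "s \<in> gen_grp r S"
proof -
  have "s \<circ> restr r \<in> gen_grp r S" by (rule gen_grp.step[OF assms(1) gen_grp.unit])
  moreover have "s \<circ> restr r = s" using assms(2) by (simp add: fun_eq_iff)
  ultimately show ?thesis by simp
qed

lemma tflip_step: assumes "1 \<le> m" "m < r"
  shows "tflip r m = refl r (alpha r m) \<circ> tflip r (Suc m) \<circ> refl r (alpha r m)"
proof (rule ext, rule ext)
  fix l j
  show "tflip r m l j = (refl r (alpha r m) \<circ> tflip r (Suc m) \<circ> refl r (alpha r m)) l j"
    using assms unfolding o_apply refl_lt[OF assms] tflip_def
    by (cases "j = m"; cases "j = Suc m") auto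
qed

lemma tflip_gen:
  assumes "\<forall>s\<in>S. \<forall>l. restr r (s l) = s l" "\<forall>s\<in>S. \<forall>l. s (restr r l) = s l"
    and "\<And>i. m \<le> i \<Longrightarrow> i \<le> r \<Longrightarrow> refl r (alpha r i) \<in> S" "1 \<le> m" "m \<le> r"
  shows "tflip r m \<in> gen_grp r S"
  using assms(3-5)
proof (induction "r - m" arbitrary: m)
  case 0
  then have "m = r" by simp
  then have "tflip r m = refl r (alpha r r)" using refl_r' 0 by simp
  moreover have "refl r (alpha r r) \<in> S" using 0 \<open>m = r\<close> by simp
  ultimately show ?case using gen_in assms(2) by metis
next
  case (Suc x)
  then have mr: "m < r" by simp
  have sm: "refl r (alpha r m) \<in> gen_grp r S" using gen_in Suc.prems assms(2) by (metis order_refl less_imp_le mr)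
  have "tflip r (Suc m) \<in> gen_grp r S" using Suc by simp
  then have "refl r (alpha r m) \<circ> tflip r (Suc m) \<circ> refl r (alpha r m) \<in> gen_grp r S"
    using gen_comp[OF assms(1)] sm by metis
  then show ?case using tflip_step[OF Suc.prems(2) mr] by simp
qed

lemma swp_sum: assumes "Suc i \<le> m" "1 \<le> i"
  shows "(\<Sum>j\<in>{1..m}. l (swp i j)) = (\<Sum>j\<in>{1..m}. (l::nat\<Rightarrow>int) j)"
proof -
  have inj: "inj_on (swp i) {1..m}"
    by (rule inj_on_inverseI[where g="swp i"]) (simp add: swp_def)
  have img: "swp i ` {1..m} = {1..m}"
  proof
    show "swp i ` {1..m} \<subseteq> {1..m}" using assms by (auto simp: swp_def)
    show "{1..m} \<subseteq> swp i ` {1..m}"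
    proof
      fix j assume j: "j \<in> {1..m}"
      have "swp i (swp i j) = j" by (simp add: swp_def)
      moreover have "swp i j \<in> {1..m}" using j assms by (auto simp: swp_def)
      ultimately show "j \<in> swp i ` {1..m}" by (metis imageI)
    qed
  qed
  have "(\<Sum>j\<in>{1..m}. l (swp i j)) = (\<Sum>j\<in>swp i ` {1..m}. l j)"
    using sum.reindex[OF inj, of l] by simp
  then show ?thesis unfolding img .
qed

lemma xP_tflip: assumes "m \<le> r"
  shows "xP m (tflip r t l) = xP m l - (if t \<in> {1..m} then 2 * l t else 0)"
proof -
  have "xP m (tflip r t l) = (\<Sum>j\<in>{1..m}. l j - 2 * (l j * eps t j))"
    unfolding xP_def tflip_def using assms by (intro sum.cong) (auto simp: eps_def)
  also have "\<dots> = xP m l - (if t \<in> {1..m} then 2 * l t else 0)"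
    unfolding xP_def by (simp add: sum_subtractf sum_distrib_left[symmetric])
  finally show ?thesis .
qed

lemma xP_refl: assumes "1 \<le> i" "i \<le> r" "i \<noteq> m" "m < r"
  shows "xP m (refl r (alpha r i) l) = xP m l"
proof (cases "i < r")
  case True
  have "xP m (refl r (alpha r i) l) = (\<Sum>j\<in>{1..m}. l (swp i j))"
    unfolding xP_def refl_lt'[OF assms(1) True] using assms by (intro sum.cong) auto
  also have "\<dots> = xP m l"
  proof (cases "i < m")
    case True then show ?thesis unfolding xP_def using swp_sum assms by simp
  next
    case False then show ?thesis unfolding xP_def using assms by (intro sum.cong) (auto simp: swp_def)
  qed
  finally show ?thesis .
next
  case False
  then have "i = r" using assms by simp
  then show ?thesis using xP_tflip[of m r r l] assms refl_r' by simp
qed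

lemma alpha_rt_lt: "i < r \<Longrightarrow> alpha r i = rt 1 i (-1) (Suc i)"
  unfolding alpha_def rt_def by (simp add: fun_eq_iff)

lemma alpha_rt_r: "alpha r r = rt 1 r 1 r"
  unfolding alpha_def rt_def by (simp add: fun_eq_iff)

lemma restr_rt: "x \<in> {1..r} \<Longrightarrow> y \<in> {1..r} \<Longrightarrow> restr r (rt c x d y) = rt c x d y"
  unfolding restr_def rt_def by (auto simp: fun_eq_iff eps_def)

lemma restr_pos: assumes "b \<in> pos_roots r" shows "restr r b = b"
proof -
  obtain a e c' where h: "1 \<le> a" "a \<le> c'" "c' \<le> r" "e = 1 \<or> (e = -1 \<and> a < c')" "b = rt 1 a e c'"
    by (rule pos_cases[OF assms])
  show ?thesis unfolding h(5) by (rule restr_rt) (use h in auto)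
qed

lemma refl_invol: assumes "1 \<le> i" "i \<le> r" "restr r l = l"
  shows "refl r (alpha r i) (refl r (alpha r i) l) = l"
proof (cases "i < r")
  case True
  show ?thesis
  proof (rule ext)
    fix j
    show "refl r (alpha r i) (refl r (alpha r i) l) j = l j"
    proof (cases "j \<in> {1..r}")
      case True
      have p: "swp i j \<in> {1..r} \<and> swp i (swp i j) = j"
        using True \<open>i < r\<close> assms(1) unfolding swp_def by (cases "j = i"; cases "j = Suc i") auto
      then show ?thesis using True unfolding refl_lt'[OF assms(1) \<open>i < r\<close>] by simp
    next
      case False
      have "restr r l j = l j" using assms(3) by simp
      then have "l j = 0" using False unfolding restr_def by (auto split: if_splits)
      then show ?thesis using False unfolding refl_lt[OF assms(1) \<open>i < r\<close>] by auto
    qed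
  qed
next
  case False
  then have ir: "i = r" using assms by simp
  show ?thesis
  proof (rule ext)
    fix j
    show "refl r (alpha r i) (refl r (alpha r i) l) j = l j"
    proof (cases "j \<in> {1..r}")
      case True
      then show ?thesis unfolding ir refl_r'[OF order.trans[OF assms(1,2)]] tflip_def by simp
    next
      case False
      have "restr r l j = l j" using assms(3) by simp
      then have "l j = 0" using False unfolding restr_def by (auto split: if_splits)
      then show ?thesis using False unfolding ir refl_r'[OF order.trans[OF assms(1,2)]] tflip_def by auto
    qed
  qed
qed

lemma tflip_invol: assumes "restr r l = l" shows "tflip r m (tflip r m l) = l"
proof (rule ext)
  fix j
  show "tflip r m (tflip r m l) j = l j"
  proof (cases "j \<in> {1..r}")
    case True then show ?thesis unfolding tflip_def by simp
  next
    case False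
    have "restr r l j = l j" using assms by simp
    then have "l j = 0" using False unfolding restr_def by (auto split: if_splits)
    then show ?thesis using False unfolding tflip_def by auto
  qed
qed

lemma swp_mono: assumes "a < b" "\<not> (a = i \<and> b = Suc i)" shows "swp i a < swp i b"
  using assms unfolding swp_def by (cases "a = i"; cases "a = Suc i"; cases "b = i"; cases "b = Suc i") auto

lemma swp_range: "1 \<le> i \<Longrightarrow> i < r \<Longrightarrow> a \<in> {1..r} \<Longrightarrow> swp i a \<in> {1..r}"
  unfolding swp_def by (cases "a = i"; cases "a = Suc i") auto

lemma alpha_pos: assumes "1 \<le> i" "i \<le> r" shows "alpha r i \<in> pos_roots r"
proof (cases "i < r")
  case True
  have "\<exists>i' j. rt 1 i (-1) (Suc i) = rt 1 i' (-1) j \<and> 1 \<le> i' \<and> i' < j \<and> j \<le> r"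
    using assms True by (intro exI[of _ i] exI[of _ "Suc i"]) auto
  then show ?thesis unfolding alpha_rt_lt[OF True] pos_roots_alt by blast
next
  case False then have "i = r" using assms by simp
  have "\<exists>i' j. rt 1 r 1 r = rt 1 i' 1 j \<and> 1 \<le> i' \<and> i' \<le> j \<and> j \<le> r"
    using assms by (intro exI[of _ r] exI[of _ r]) auto
  then show ?thesis unfolding \<open>i = r\<close> alpha_rt_r pos_roots_alt by blast
qed

lemma refl_alpha_self: assumes "1 \<le> i" "i \<le> r"
  shows "refl r (alpha r i) (alpha r i) = (\<lambda>n. - alpha r i n)"
proof (cases "i < r")
  case True
  have a: "i \<in> {1..r}" "Suc i \<in> {1..r}" using assms True by auto
  have "refl r (alpha r i) (alpha r i) = refl r (alpha r i) (rt 1 i (-1) (Suc i))"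
    by (rule arg_cong[where f="refl r (alpha r i)", OF alpha_rt_lt[OF True]])
  also have "\<dots> = rt (1 * 1) (swp i i) (-1 * 1) (swp i (Suc i))"
    by (rule SP_rt[OF SP_swp[OF assms(1) True] a])
  also have "\<dots> = (\<lambda>n. - alpha r i n)" unfolding alpha_rt_lt[OF True] rt_neg
    by (simp add: swp_def rt_comm)
  finally show ?thesis .
next
  case False then have ir: "i = r" using assms by simp
  have a: "r \<in> {1..r}" using assms by auto
  have "refl r (alpha r i) (alpha r i) = tflip r r (rt 1 r 1 r)"
    unfolding ir alpha_rt_r[symmetric] refl_r'[OF order.trans[OF assms]] ..
  also have "\<dots> = rt (1 * (if r = r then -1 else 1)) (id r) (1 * (if r = r then -1 else 1)) (id r)"
    by (rule SP_rt[OF SP_tflip[OF a] a a])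
  also have "\<dots> = (\<lambda>n. - alpha r i n)" unfolding ir alpha_rt_r rt_neg by simp
  finally show ?thesis .
qed

lemma pos_simple: assumes "1 \<le> i" "i \<le> r" "b \<in> pos_roots r" "b \<noteq> alpha r i"
  shows "refl r (alpha r i) b \<in> pos_roots r"
proof -
  obtain a e c where h: "1 \<le> a" "a \<le> c" "c \<le> r" "e = 1 \<or> (e = -1 \<and> a < c)" "b = rt 1 a e c"
    by (rule pos_cases[OF assms(3)])
  show ?thesis
  proof (cases "i < r")
    case True
    note S = SP_swp[OF assms(1) True]
    have ra: "swp i a \<le> r" "swp i c \<le> r" using swp_range[OF assms(1) True] h by auto
    have "Hv r (swp i) (\<lambda>_. 1) a + e * Hv r (swp i) (\<lambda>_. 1) c > 0"
    proof (cases "e = 1")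
      case True then show ?thesis unfolding Hv_def using ra by simp
    next
      case False
      then have em: "e = -1" "a < c" using h(4) by auto
      have "\<not> (a = i \<and> c = Suc i)"
      proof
        assume "a = i \<and> c = Suc i"
        then have "b = alpha r i" using h(5) em alpha_rt_lt[OF \<open>i < r\<close>] by simp
        then show False using assms(4) by simp
      qed
      then have "swp i a < swp i c" using swp_mono em by blast
      then show ?thesis unfolding Hv_def using ra em by simp
    qed
    then show ?thesis unfolding h(5) using SP_img(1)[OF S h(1-4)] by simp
  next
    case False
    then have ir: "i = r" using assms by simp
    have rr: "r \<in> {1..r}" using assms by auto
    note S = SP_tflip[OF rr]
    have "Hv r id (\<lambda>a. if a = r then -1 else 1) a + e * Hv r id (\<lambda>a. if a = r then -1 else 1) c > 0"
    proof (cases "e = 1")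
      case True
      have "\<not> (a = r \<and> c = r)"
      proof
        assume "a = r \<and> c = r"
        then have "b = alpha r i" using h(5) True ir alpha_rt_r by simp
        then show False using assms(4) by simp
      qed
      then show ?thesis unfolding Hv_def using True h by (cases "c = r") auto
    next
      case False
      then have em: "e = -1" "a < c" using h(4) by auto
      then show ?thesis unfolding Hv_def using h by (cases "c = r") auto
    qed
    then show ?thesis unfolding h(5) ir refl_r'[OF order.trans[OF assms(1,2)]] using SP_img(1)[OF S h(1-4)] by simp
  qed
qed

lemma pos_tflipM: assumes "1 \<le> s" "s \<le> r" "b \<in> pos_roots r" "even (xP s b)" "b \<noteq> rt 1 s 1 s"
  shows "tflip r s b \<in> pos_roots r"
proof -
  obtain a e c where h: "1 \<le> a" "a \<le> c" "c \<le> r" "e = 1 \<or> (e = -1 \<and> a < c)" "b = rt 1 a e c"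
    by (rule pos_cases[OF assms(3)])
  have ss: "s \<in> {1..r}" using assms by auto
  note S = SP_tflip[OF ss]
  have ev: "even ((if a \<in> {1..s} then 1 else 0) + e * (if c \<in> {1..s} then 1 else (0::int)))"
    using assms(4) unfolding h(5) xP_rt by simp
  have blk: "a \<le> s \<longleftrightarrow> c \<le> s" using ev h by (auto split: if_splits)
  have "Hv r id (\<lambda>a. if a = s then -1 else 1) a + e * Hv r id (\<lambda>a. if a = s then -1 else 1) c > 0"
  proof (cases "e = 1")
    case True
    have "\<not> (a = s \<and> c = s)"
    proof
      assume "a = s \<and> c = s"
      then have "b = rt 1 s 1 s" using h(5) True by simp
      then show False using assms(5) by simp
    qed
    then show ?thesis unfolding Hv_def using True h blk by (cases "c = s"; cases "a = s") auto
  next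
    case False
    then have em: "e = -1" "a < c" using h(4) by auto
    then show ?thesis unfolding Hv_def using h blk by (cases "c = s"; cases "a = s") auto
  qed
  then show ?thesis unfolding h(5) using SP_img(1)[OF S h(1-4)] by simp
qed

lemma tflip_self: assumes "s \<in> {1..r}" shows "tflip r s (rt 1 s 1 s) = (\<lambda>n. - rt 1 s 1 s n)"
proof -
  have "tflip r s (rt 1 s 1 s) = rt (1 * (if s = s then -1 else 1)) (id s) (1 * (if s = s then -1 else 1)) (id s)"
    by (rule SP_rt[OF SP_tflip[OF assms] assms assms])
  then show ?thesis unfolding rt_neg by simp
qed

lemma gens_restr: "\<forall>s\<in>{refl r (alpha r i) | i. P i}. \<forall>l. restr r (s l) = s l"
  using refl_restr_out by blast

lemma gens_restr_in: "\<forall>s\<in>{refl r (alpha r i) | i. P i}. \<forall>l. s (restr r l) = s l"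
  using refl_restr_in by blast

lemma sref_gen: "P i \<Longrightarrow> refl r (alpha r i) \<in> gen_grp r {refl r (alpha r i) | i. P i}"
  by (rule gen_in) (auto simp: refl_restr_in)

lemma sref_W: "1 \<le> i \<Longrightarrow> i \<le> r \<Longrightarrow> refl r (alpha r i) \<in> weylW r"
  unfolding weylW_def by (rule sref_gen) simp

lemma sref_L: "1 \<le> i \<Longrightarrow> i \<le> r \<Longrightarrow> i \<noteq> k \<Longrightarrow> refl r (alpha r i) \<in> weylL r k"
  unfolding weylL_def by (rule sref_gen) simp

lemma restr_W: "restr r \<in> weylW r" unfolding weylW_def by (rule gen_grp.unit)
lemma restr_L: "restr r \<in> weylL r k" unfolding weylL_def by (rule gen_grp.unit)

lemma xP_restr: "m \<le> r \<Longrightarrow> xP m (restr r l) = xP m l"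
  unfolding xP_def restr_def by (rule sum.cong) auto

lemma restr_M: "s \<le> r \<Longrightarrow> restr r \<in> weylM r s"
  by (rule weylM_I) (auto simp: restr_W xP_restr)

lemma sref_M: "1 \<le> i \<Longrightarrow> i \<le> r \<Longrightarrow> i \<noteq> s \<Longrightarrow> s < r \<Longrightarrow> refl r (alpha r i) \<in> weylM r s"
  by (rule weylM_I) (auto simp: sref_W xP_refl)

lemma tflip_W: "1 \<le> m \<Longrightarrow> m \<le> r \<Longrightarrow> tflip r m \<in> weylW r"
  unfolding weylW_def by (rule tflip_gen[OF gens_restr gens_restr_in]) auto

lemma tflip_L: "k < m \<Longrightarrow> m \<le> r \<Longrightarrow> tflip r m \<in> weylL r k"
  unfolding weylL_def by (rule tflip_gen[OF gens_restr gens_restr_in]) auto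

lemma tflip_M: "1 \<le> m \<Longrightarrow> m \<le> r \<Longrightarrow> s \<le> r \<Longrightarrow> tflip r m \<in> weylM r s"
  by (rule weylM_I) (auto simp: tflip_W xP_tflip)

lemma SP_W: "w \<in> weylW r \<Longrightarrow> \<exists>\<rho> c. SP r w \<rho> c"
  unfolding weylW_def by (rule SP_weylW) auto

lemma weylL_W: "v \<in> weylL r k \<Longrightarrow> v \<in> weylW r"
proof -
  assume "v \<in> weylL r k"
  then show "v \<in> weylW r" unfolding weylL_def
  proof induction
    case unit then show ?case by (rule restr_W)
  next
    case (step s w)
    then obtain i where i: "s = refl r (alpha r i)" "1 \<le> i" "i \<le> r" by blast
    have "s \<in> {refl r (alpha r i) |i. 1 \<le> i \<and> i \<le> r}" using i by blast
    then show ?case using step.IH unfolding weylW_def by (rule gen_grp.step)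
  qed
qed

definition Aset :: "nat \<Rightarrow> nat \<Rightarrow> weight set" where
  "Aset r k = pos_roots r - pos_rootsL r k"

lemma Aset_iff: "b \<in> Aset r k \<longleftrightarrow> b \<in> pos_roots r \<and> xP k b \<noteq> 0"
  unfolding Aset_def pos_rootsL_def by auto

lemma weylL_inv:
  assumes "k < r" "v \<in> weylL r k"
  shows "(\<forall>b\<in>Aset r k. v b \<in> Aset r k) \<and> inj_on v {l. restr r l = l} \<and> (\<forall>l. restr r (v l) = v l)"
  using assms(2) unfolding weylL_def
proof induction
  case unit
  have "\<forall>b\<in>Aset r k. restr r b = b" using restr_pos Aset_iff by blast
  moreover have "inj_on (restr r) {l. restr r l = l}" by (rule inj_onI) simp
  moreover have "\<forall>l. restr r (restr r l) = restr r l" by (simp add: restr_def fun_eq_iff)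
  ultimately show ?case by simp
next
  case (step s w)
  obtain i where i: "s = refl r (alpha r i)" "1 \<le> i" "i \<le> r" "i \<noteq> k" using step.hyps by blast
  have IH1: "\<forall>b\<in>Aset r k. w b \<in> Aset r k" and IH2: "inj_on w {l. restr r l = l}"
    and IH3: "\<forall>l. restr r (w l) = w l" using step.IH by blast+
  have 1: "\<forall>b\<in>Aset r k. s (w b) \<in> Aset r k"
  proof
    fix b assume "b \<in> Aset r k"
    then have wb: "w b \<in> pos_roots r" "xP k (w b) \<noteq> 0" using IH1 Aset_iff by blast+
    have "w b \<noteq> alpha r i" using wb(2) xP_alpha[OF assms(1) i(2,3)] i(4) by auto
    then have "s (w b) \<in> pos_roots r" unfolding i(1) by (rule pos_simple[OF i(2,3) wb(1)])
    moreover have "xP k (s (w b)) = xP k (w b)" unfolding i(1) by (rule xP_refl[OF i(2,3,4) assms(1)])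
    ultimately show "s (w b) \<in> Aset r k" using wb(2) Aset_iff by simp
  qed
  have 2: "inj_on (s \<circ> w) {l. restr r l = l}"
  proof (rule inj_onI)
    fix x y assume x: "x \<in> {l. restr r l = l}" and y: "y \<in> {l. restr r l = l}" and e: "(s \<circ> w) x = (s \<circ> w) y"
    have "w x = s (s (w x))" using refl_invol[OF i(2,3) IH3[rule_format, of x]] unfolding i(1) by simp
    also have "\<dots> = s (s (w y))" using e by simp
    also have "\<dots> = w y" using refl_invol[OF i(2,3) IH3[rule_format, of y]] unfolding i(1) by simp
    finally show "x = y" using IH2 x y by (auto dest: inj_onD)
  qed
  have 3: "\<forall>l. restr r ((s \<circ> w) l) = (s \<circ> w) l" unfolding i(1) o_apply by (simp add: refl_restr_out)
  show ?case using 1 2 3 unfolding o_apply by (simp only: comp_def) blast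
qed

lemma card_perm:
  assumes "finite X" "\<forall>b\<in>X. v b \<in> X" "inj_on v X"
  shows "card {b\<in>X. P (v b)} = card {b\<in>X. P b}"
proof -
  have vX: "v ` X = X" using endo_inj_surj[OF assms(1) _ assms(3)] assms(2) by blast
  have "v ` {b\<in>X. P (v b)} = {b\<in>X. P b}"
  proof
    show "v ` {b\<in>X. P (v b)} \<subseteq> {b\<in>X. P b}" using assms(2) by blast
    show "{b\<in>X. P b} \<subseteq> v ` {b\<in>X. P (v b)}"
    proof
      fix y assume "y \<in> {b\<in>X. P b}"
      then obtain x where "x \<in> X" "y = v x" "P y" using vX by blast
      then show "y \<in> v ` {b\<in>X. P (v b)}" by blast
    qed
  qed
  moreover have "inj_on v {b\<in>X. P (v b)}" using assms(3) by (rule inj_on_subset) blast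
  ultimately show ?thesis using card_image by metis
qed

lemma neg_negI: assumes "g \<in> neg_roots r" shows "(\<lambda>n. - g n) \<in> pos_roots r"
proof -
  obtain b where "b \<in> pos_roots r" "g = (\<lambda>n. - b n)" using assms unfolding neg_roots_def by blast
  then show ?thesis by simp
qed

lemma SP_neg: assumes "SP r w \<rho> c" shows "w (\<lambda>n. - a n) = (\<lambda>n. - w a n)"
  using SP_D(2)[OF assms, rule_format, of "-1" a] by simp

lemma weylQ_L: "v \<in> weylQ r s k \<Longrightarrow> v \<in> weylL r k" unfolding weylQ_def by blast
lemma weylQ_M: "v \<in> weylQ r s k \<Longrightarrow> v \<in> weylM r s" unfolding weylQ_def by blast

lemma minstep:
  assumes sr: "s \<le> r" and w: "w \<in> weylMQ r s k" and S: "SP r w \<rho> c"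
    and al: "al \<in> pos_rootsM r s" and v: "v \<in> weylQ r s k"
    and va: "v al = (\<lambda>n. - al n)"
    and vp: "\<And>b. b \<in> pos_rootsM r s \<Longrightarrow> b \<noteq> al \<Longrightarrow> v b \<in> pos_roots r"
    and vv: "\<And>b. b \<in> pos_rootsM r s \<Longrightarrow> v (v b) = b"
  shows "w al \<in> pos_roots r"
proof (rule ccontr)
  assume np: "w al \<notin> pos_roots r"
  have alp: "al \<in> pos_roots r" using al posM_iff[OF sr] by blast
  have wan: "w al \<in> neg_roots r" using SP_pn[OF S alp] np by blast
  let ?X = "pos_rootsM r s"
  have fin: "finite ?X" using finite_pos unfolding pos_rootsM_def by simp
  have sub: "{b\<in>?X. w (v b) \<in> neg_roots r} \<subseteq> v ` ({g\<in>?X. w g \<in> neg_roots r} - {al})"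
  proof
    fix b assume b: "b \<in> {b\<in>?X. w (v b) \<in> neg_roots r}"
    then have bX: "b \<in> ?X" and wvb: "w (v b) \<in> neg_roots r" by auto
    have bp: "b \<in> pos_roots r" and bev: "even (xP s b)" using bX posM_iff[OF sr] by auto
    have "b \<noteq> al"
    proof
      assume "b = al"
      then have "w (v b) = (\<lambda>n. - w al n)" using va SP_neg[OF S] by simp
      moreover have "(\<lambda>n. - w al n) \<in> pos_roots r" by (rule neg_negI[OF wan])
      ultimately have "w (v b) \<in> pos_roots r" by simp
      then show False using wvb pos_neg_disj by blast
    qed
    then have vbp: "v b \<in> pos_roots r" using vp bX by blast
    have "even (xP s (v b))" using weylM_par[OF sr weylQ_M[OF v]] bev by simp
    then have vbX: "v b \<in> ?X" using vbp posM_iff[OF sr] by blast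
    have "v b \<noteq> al"
    proof
      assume "v b = al"
      then have "b = (\<lambda>n. - al n)" using vv[OF bX] va by simp
      moreover have "(\<lambda>n. - al n) \<in> neg_roots r" by (rule negI[OF alp])
      ultimately have "b \<in> neg_roots r" by simp
      then show False using bp pos_neg_disj by blast
    qed
    then have "v b \<in> {g\<in>?X. w g \<in> neg_roots r} - {al}" using vbX wvb by blast
    moreover have "b = v (v b)" using vv[OF bX] by simp
    ultimately show "b \<in> v ` ({g\<in>?X. w g \<in> neg_roots r} - {al})" by blast
  qed
  have "lenM r s (w \<circ> v) = card {b\<in>?X. w (v b) \<in> neg_roots r}" unfolding lenM_def by simp
  also have "\<dots> \<le> card (v ` ({g\<in>?X. w g \<in> neg_roots r} - {al}))"
    by (rule card_mono[OF _ sub]) (use fin in simp)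
  also have "\<dots> \<le> card ({g\<in>?X. w g \<in> neg_roots r} - {al})" by (rule card_image_le) (use fin in simp)
  also have "\<dots> < card {g\<in>?X. w g \<in> neg_roots r}"
    by (rule card_Diff1_less) (use fin al wan in simp_all)
  also have "\<dots> = lenM r s w" unfolding lenM_def by simp
  finally have "lenM r s (w \<circ> v) < lenM r s w" .
  moreover have "\<forall>v\<in>weylQ r s k. lenM r s w \<le> lenM r s (w \<circ> v)" using w unfolding weylMQ_def by simp
  then have "lenM r s w \<le> lenM r s (w \<circ> v)" using v by (rule bspec)
  ultimately show False by simp
qed

lemma chain:
  assumes "\<And>i. lo \<le> i \<Longrightarrow> i < hi \<Longrightarrow> (H::nat\<Rightarrow>int) i > H (Suc i)" "lo \<le> a" "a < b" "b \<le> hi"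
  shows "H a > H b"
  using assms(3,4)
proof (induction b)
  case 0 then show ?case by simp
next
  case (Suc b)
  show ?case
  proof (cases "a = b")
    case True then show ?thesis using assms(1,2) Suc.prems by simp
  next
    case False
    then have "H a > H b" using Suc by simp
    moreover have "H b > H (Suc b)" using assms(1,2) Suc.prems False by simp
    ultimately show ?thesis by simp
  qed
qed

lemma posL:
  assumes k1: "1 \<le> k" and ks: "k \<le> s" and sr: "s < r" and w: "w \<in> weylMQ r s k" and S: "SP r w \<rho> c"
  shows "\<forall>b\<in>pos_rootsL r k. w b \<in> pos_roots r"
proof -
  have sr': "s \<le> r" using sr by simp
  have wM: "w \<in> weylM r s" using w unfolding weylMQ_def by blast
  define H where "H = Hv r \<rho> c"
  have simple: "w (alpha r i) \<in> pos_roots r" if i: "1 \<le> i" "i \<le> r" "i \<noteq> k" "i \<noteq> s" for i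
  proof (rule minstep[OF sr' w S])
    have "xP s (alpha r i) = 0" using xP_alpha[OF sr i(1,2)] i(4) by simp
    then show "alpha r i \<in> pos_rootsM r s" unfolding posM_iff[OF sr'] using alpha_pos[OF i(1,2)] by simp
    show "refl r (alpha r i) \<in> weylQ r s k" unfolding weylQ_def using sref_M[OF i(1,2,4) sr] sref_L[OF i(1,2,3)] by blast
    show "refl r (alpha r i) (alpha r i) = (\<lambda>n. - alpha r i n)" by (rule refl_alpha_self[OF i(1,2)])
    show "refl r (alpha r i) b \<in> pos_roots r" if "b \<in> pos_rootsM r s" "b \<noteq> alpha r i" for b
      using pos_simple[OF i(1,2) _ that(2)] that(1) posM_iff[OF sr'] by blast
    show "refl r (alpha r i) (refl r (alpha r i) b) = b" if "b \<in> pos_rootsM r s" for b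
    proof (rule refl_invol[OF i(1,2)])
      show "restr r b = b" using that posM_iff[OF sr'] restr_pos by blast
    qed
  qed
  have tfl: "w (rt 1 s 1 s) \<in> pos_roots r" if kls: "k < s"
  proof (rule minstep[OF sr' w S])
    have s1: "1 \<le> s" "s \<in> {1..r}" using k1 ks sr by auto
    have "\<exists>i' j. rt 1 s 1 s = rt 1 i' 1 j \<and> 1 \<le> i' \<and> i' \<le> j \<and> j \<le> r"
      using s1 sr by (intro exI[of _ s] exI[of _ s]) auto
    then have "rt 1 s 1 s \<in> pos_roots r" unfolding pos_roots_alt by blast
    moreover have "xP s (rt 1 s 1 s) = 2" unfolding xP_rt using s1 by simp
    ultimately show "rt 1 s 1 s \<in> pos_rootsM r s" unfolding posM_iff[OF sr'] by simp
    show "tflip r s \<in> weylQ r s k" unfolding weylQ_def using tflip_M[OF s1(1) sr' sr'] tflip_L[OF kls sr'] by blast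
    show "tflip r s (rt 1 s 1 s) = (\<lambda>n. - rt 1 s 1 s n)" by (rule tflip_self[OF s1(2)])
    show "tflip r s b \<in> pos_roots r" if "b \<in> pos_rootsM r s" "b \<noteq> rt 1 s 1 s" for b
      using pos_tflipM[OF s1(1) sr' _ _ that(2)] that(1) posM_iff[OF sr'] by blast
    show "tflip r s (tflip r s b) = b" if "b \<in> pos_rootsM r s" for b
    proof (rule tflip_invol)
      show "restr r b = b" using that posM_iff[OF sr'] restr_pos by blast
    qed
  qed
  have dec: "H i > H (Suc i)" if i: "1 \<le> i" "i < r" "i \<noteq> k" "i \<noteq> s" for i
  proof -
    have "w (alpha r i) \<in> pos_roots r" using simple[OF i(1) _ i(3,4)] i(2) by simp
    then have "w (rt 1 i (-1) (Suc i)) \<in> pos_roots r" using alpha_rt_lt[OF i(2)] by simp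
    then show ?thesis using SP_img(1)[OF S, of i "Suc i" "-1"] i unfolding H_def by simp
  qed
  have Hr: "H r > 0"
  proof -
    have "w (alpha r r) \<in> pos_roots r" using simple[of r] k1 ks sr by simp
    then have "w (rt 1 r 1 r) \<in> pos_roots r" using alpha_rt_r by simp
    then show ?thesis using SP_img(1)[OF S, of r r 1] k1 ks sr unfolding H_def by simp
  qed
  have Hs: "H s > 0" if "k < s"
  proof -
    have "w (rt 1 s 1 s) \<in> pos_roots r" using tfl[OF that] .
    then show ?thesis using SP_img(1)[OF S, of s s 1] k1 ks sr unfolding H_def by simp
  qed
  have Hform: "H a = c a * int (Suc r - \<rho> a) \<and> (c a = 1 \<or> c a = -1) \<and> \<rho> a \<in> {1..r} \<and> (\<rho> a \<le> s \<longleftrightarrow> a \<le> s)"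
    if a: "a \<in> {1..r}" for a
  proof -
    have "\<rho> a \<in> {1..r}" using SP_D(5)[OF S] a by blast
    moreover have "c a = 1 \<or> c a = -1" using SP_D(7)[OF S] a by blast
    moreover have "\<rho> a \<le> s \<longleftrightarrow> a \<le> s" by (rule block[OF sr' wM S a])
    ultimately show ?thesis unfolding H_def Hv_def by simp
  qed
  have posH: "H x > 0" if x: "k < x" "x \<le> r" for x
  proof (cases "s < x")
    case True
    show ?thesis
    proof (cases "x = r")
      case True then show ?thesis using Hr by simp
    next
      case False
      have "H x > H r" by (rule chain[where lo="Suc s" and hi=r]) (use dec \<open>s < x\<close> x False ks in auto)
      then show ?thesis using Hr by simp
    qed
  next
    case False
    then have kls: "k < s" using x by simp
    show ?thesis
    proof (cases "x = s")
      case True then show ?thesis using Hs[OF kls] by simp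
    next
      case False
      have "H x > H s" by (rule chain[where lo="Suc k" and hi=s]) (use dec \<open>\<not> s < x\<close> x False ks sr in auto)
      then show ?thesis using Hs[OF kls] by simp
    qed
  qed
  show ?thesis
  proof
    fix b assume b: "b \<in> pos_rootsL r k"
    then have bp: "b \<in> pos_roots r" and bx: "xP k b = 0" unfolding pos_rootsL_def by auto
    obtain a e d where h: "1 \<le> a" "a \<le> d" "d \<le> r" "e = 1 \<or> (e = -1 \<and> a < d)" "b = rt 1 a e d"
      by (rule pos_cases[OF bp])
    have x0: "(if a \<in> {1..k} then 1 else 0) + e * (if d \<in> {1..k} then 1 else (0::int)) = 0"
      using bx unfolding h(5) xP_rt by simp
    have "H a + e * H d > 0"
    proof (cases "e = 1")
      case True
      then have "k < a" "k < d" using x0 h by (auto split: if_splits)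
      then have "H a > 0" "H d > 0" using posH h by auto
      then show ?thesis using True by simp
    next
      case False
      then have em: "e = -1" "a < d" using h(4) by auto
      then have blk: "a \<le> k \<longleftrightarrow> d \<le> k" using x0 h by (auto split: if_splits)
      have "H a > H d"
      proof (cases "d \<le> k")
        case True
        show ?thesis by (rule chain[where lo=1 and hi=k]) (use dec True em h ks sr in auto)
      next
        case False
        then have ka: "k < a" using blk by simp
        show ?thesis
        proof (cases "d \<le> s")
          case True
          show ?thesis by (rule chain[where lo="Suc k" and hi=s]) (use dec True em h ka sr in auto)
        next
          case ds: False
          show ?thesis
          proof (cases "s < a")
            case True
            show ?thesis by (rule chain[where lo="Suc s" and hi=r]) (use dec True em h ks in auto)
          next
            case False
            have ha: "H a > 0" using posH[OF ka] h by simp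
            have fa: "H a = c a * int (Suc r - \<rho> a)" "c a = 1 \<or> c a = -1" "\<rho> a \<in> {1..r}" "\<rho> a \<le> s"
              using Hform[of a] h False by auto
            have fd: "H d = c d * int (Suc r - \<rho> d)" "c d = 1 \<or> c d = -1" "\<rho> d \<in> {1..r}" "\<not> \<rho> d \<le> s"
              using Hform[of d] h ds by auto
            have "c a = 1" using fa ha by (auto simp: mult_less_0_iff)
            then have "H a \<ge> int (Suc r - s)" using fa sr by (simp add: of_nat_diff)
            moreover have "H d \<le> int (Suc r - \<rho> d)" using fd by auto
            moreover have "int (Suc r - \<rho> d) < int (Suc r - s)" using fd sr by auto
            ultimately show ?thesis by simp
          qed
        qed
      qed
      then show ?thesis using em by simp
    qed
    then show "w b \<in> pos_roots r" unfolding h(5) using SP_img(1)[OF S h(1-4)] unfolding H_def by simp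
  qed
qed

lemma xP_one:
  assumes ks: "k \<le> s" and bp: "b \<in> pos_roots r" and bk: "xP k b \<noteq> 0" and bs: "odd (xP s b)"
  shows "xP k b = 1"
proof -
  obtain a e d where h: "1 \<le> a" "a \<le> d" "d \<le> r" "e = 1 \<or> (e = -1 \<and> a < d)" "b = rt 1 a e d"
    by (rule pos_cases[OF bp])
  have xk: "xP k b = (if a \<in> {1..k} then 1 else 0) + e * (if d \<in> {1..k} then 1 else 0)"
    unfolding h(5) xP_rt by simp
  have xs: "xP s b = (if a \<in> {1..s} then 1 else 0) + e * (if d \<in> {1..s} then 1 else 0)"
    unfolding h(5) xP_rt by simp
  show ?thesis
  proof (cases "e = 1")
    case True
    then show ?thesis using xk xs bk bs h ks by (auto split: if_splits)
  next
    case False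
    then have "e = -1" "a < d" using h(4) by auto
    then show ?thesis using xk bk h by (auto split: if_splits)
  qed
qed

lemma Bset_iff: "s \<le> r \<Longrightarrow> b \<in> pos_rootsM r s - pos_rootsL r k \<longleftrightarrow> b \<in> Aset r k \<and> even (xP s b)"
  unfolding Aset_def using posM_iff[of s r b] pos_rootsM_def by auto

lemma card_split:
  assumes "finite X" "\<forall>b\<in>X. P b \<or> Q b" "\<forall>b\<in>X. \<not> (P b \<and> Q b)"
  shows "card X = card {b\<in>X. P b} + card {b\<in>X. Q b}"
proof -
  have "X = {b\<in>X. P b} \<union> {b\<in>X. Q b}" using assms(2) by blast
  moreover have "{b\<in>X. P b} \<inter> {b\<in>X. Q b} = {}" using assms(3) by blast
  ultimately show ?thesis using assms(1) by (metis (no_types, lifting) card_Un_disjoint finite_Un)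
qed

theorem mainTheorem6:
  fixes r s k :: nat and w :: "weight \<Rightarrow> weight"
  assumes "1 \<le> k" and "k \<le> s" and "s < r"
    and "w \<in> weylMQ r s k"
  shows "int (codim_cell r k w) - int (codim_cellM r s k w)
           = xP k (\<lambda>j. chi r k w j - chiM r s k w j)"
proof -
  have k1: "1 \<le> k" and ks: "k \<le> s" and sr: "s < r" and w: "w \<in> weylMQ r s k" using assms by auto
  have sr': "s \<le> r" and kr: "k < r" using ks sr by auto
  have wM: "w \<in> weylM r s" using w unfolding weylMQ_def by blast
  then have wW: "w \<in> weylW r" unfolding weylM_def by blast
  obtain \<rho> c where S: "SP r w \<rho> c" using SP_W[OF wW] by blast
  have PL: "\<forall>b\<in>pos_rootsL r k. w b \<in> pos_roots r" by (rule posL[OF k1 ks sr w S])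
  define A where "A = Aset r k"
  define B where "B = pos_rootsM r s - pos_rootsL r k"
  have finA: "finite A" unfolding A_def Aset_def using finite_pos by simp
  have BA: "B \<subseteq> A" unfolding A_def B_def using Bset_iff[OF sr'] by blast
  have finB: "finite B" using finA BA finite_subset by blast
  have Apos: "\<forall>b\<in>A. b \<in> pos_roots r" unfolding A_def using Aset_iff by blast
  define N where "N = card {b\<in>A. w b \<in> neg_roots r}"
  define NM where "NM = card {b\<in>B. w b \<in> neg_roots r}"
  have lenw: "len r w = N"
  proof -
    have "{b\<in>pos_roots r. w b \<in> neg_roots r} = {b\<in>A. w b \<in> neg_roots r}"
      unfolding A_def Aset_def using PL pos_neg_disj by blast
    then show ?thesis unfolding len_def N_def by simp
  qed
  have lenMw: "lenM r s w = NM"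
  proof -
    have "{b\<in>pos_rootsM r s. w b \<in> neg_roots r} = {b\<in>B. w b \<in> neg_roots r}"
      unfolding B_def using PL pos_neg_disj unfolding pos_rootsM_def by blast
    then show ?thesis unfolding lenM_def NM_def by simp
  qed
  have wr: "w \<circ> restr r = w"
  proof
    fix l show "(w \<circ> restr r) l = w l" using SP_D(3)[OF S] by simp
  qed
  have lowL: "N \<le> len r (w \<circ> v)" if v: "v \<in> weylL r k" for v
  proof -
    note inv = weylL_inv[OF kr v]
    have vA: "\<forall>b\<in>A. v b \<in> A" using inv unfolding A_def by blast
    have injA: "inj_on v A"
    proof (rule inj_on_subset)
      show "inj_on v {l. restr r l = l}" using inv by blast
      show "A \<subseteq> {l. restr r l = l}" using Apos restr_pos by blast
    qed
    have "N = card {b\<in>A. w (v b) \<in> neg_roots r}" unfolding N_def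
      by (rule card_perm[OF finA vA injA, symmetric])
    also have "\<dots> \<le> card {b\<in>pos_roots r. w (v b) \<in> neg_roots r}"
      by (rule card_mono) (use finite_pos Apos in auto)
    also have "\<dots> = len r (w \<circ> v)" unfolding len_def by simp
    finally show ?thesis .
  qed
  have lowM: "NM \<le> lenM r s (w \<circ> v)" if v: "v \<in> weylQ r s k" for v
  proof -
    have vL: "v \<in> weylL r k" and vM: "v \<in> weylM r s" using v unfolding weylQ_def by auto
    note inv = weylL_inv[OF kr vL]
    have vB: "\<forall>b\<in>B. v b \<in> B"
    proof
      fix b assume "b \<in> B"
      then have "b \<in> Aset r k" "even (xP s b)" unfolding B_def using Bset_iff[OF sr'] by auto
      then have "v b \<in> Aset r k" "even (xP s (v b))" using inv weylM_par[OF sr' vM] by auto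
      then show "v b \<in> B" unfolding B_def using Bset_iff[OF sr'] by blast
    qed
    have injB: "inj_on v B"
    proof (rule inj_on_subset)
      show "inj_on v {l. restr r l = l}" using inv by blast
      show "B \<subseteq> {l. restr r l = l}" using BA Apos restr_pos by blast
    qed
    have "NM = card {b\<in>B. w (v b) \<in> neg_roots r}" unfolding NM_def
      by (rule card_perm[OF finB vB injB, symmetric])
    also have "\<dots> \<le> card {b\<in>pos_rootsM r s. w (v b) \<in> neg_roots r}"
      by (rule card_mono) (use finite_pos in \<open>auto simp: B_def pos_rootsM_def\<close>)
    also have "\<dots> = lenM r s (w \<circ> v)" unfolding lenM_def by simp
    finally show ?thesis .
  qed
  have dimL: "dim_cell r k w = N"
    unfolding dim_cell_def
  proof (rule Least_equality)
    show "\<exists>v\<in>weylL r k. N = len r (w \<circ> v)" using restr_L wr lenw by metis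
    show "\<And>y. \<exists>v\<in>weylL r k. y = len r (w \<circ> v) \<Longrightarrow> N \<le> y" using lowL by blast
  qed
  have dimM: "dim_cellM r s k w = NM"
    unfolding dim_cellM_def
  proof (rule Least_equality)
    have "restr r \<in> weylQ r s k" unfolding weylQ_def using restr_L restr_M[OF sr'] by blast
    then show "\<exists>v\<in>weylQ r s k. NM = lenM r s (w \<circ> v)" using wr lenMw by metis
    show "\<And>y. \<exists>v\<in>weylQ r s k. y = lenM r s (w \<circ> v) \<Longrightarrow> NM \<le> y" using lowM by blast
  qed
  define Ap where "Ap = {b\<in>A. w b \<in> pos_roots r}"
  define Bp where "Bp = {b\<in>B. w b \<in> pos_roots r}"
  have cA: "card A = card Ap + N" unfolding Ap_def N_def
    by (rule card_split[OF finA]) (use Apos SP_pn[OF S] pos_neg_disj in blast)+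
  have cB: "card B = card Bp + NM" unfolding Bp_def NM_def
    by (rule card_split[OF finB]) (use BA Apos SP_pn[OF S] pos_neg_disj in blast)+
  have BpAp: "Bp \<subseteq> Ap" unfolding Ap_def Bp_def using BA by blast
  have finAp: "finite Ap" unfolding Ap_def using finA by simp
  have one: "\<forall>b\<in>Ap - Bp. xP k b = 1"
  proof
    fix b assume b: "b \<in> Ap - Bp"
    then have bA: "b \<in> Aset r k" and bB: "b \<notin> B" unfolding Ap_def Bp_def A_def by auto
    then have "odd (xP s b)" unfolding B_def using Bset_iff[OF sr'] by blast
    moreover have "b \<in> pos_roots r" "xP k b \<noteq> 0" using bA Aset_iff by auto
    ultimately show "xP k b = 1" using xP_one[OF ks] by blast
  qed
  have chiD: "(\<lambda>j. chi r k w j - chiM r s k w j) = (\<lambda>j. \<Sum>b\<in>Ap - Bp. b j)"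
  proof
    fix j
    have "chi r k w j = (\<Sum>b\<in>Ap. b j)" unfolding chi_def Ap_def A_def Aset_def by simp
    moreover have "chiM r s k w j = (\<Sum>b\<in>Bp. b j)" unfolding chiM_def Bp_def B_def by simp
    ultimately show "chi r k w j - chiM r s k w j = (\<Sum>b\<in>Ap - Bp. b j)"
      using sum_diff[OF finAp BpAp, of "\<lambda>b. b j"] by simp
  qed
  have "xP k (\<lambda>j. chi r k w j - chiM r s k w j) = (\<Sum>j\<in>{1..k}. \<Sum>b\<in>Ap - Bp. b j)"
    unfolding chiD xP_def by simp
  also have "\<dots> = (\<Sum>b\<in>Ap - Bp. xP k b)" unfolding xP_def by (rule sum.swap)
  also have "\<dots> = (\<Sum>b\<in>Ap - Bp. 1)" using one by (intro sum.cong) auto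
  also have "\<dots> = int (card (Ap - Bp))" by simp
  also have "\<dots> = int (card Ap) - int (card Bp)"
    using card_Diff_subset[OF finite_subset[OF BpAp finAp] BpAp] card_mono[OF finAp BpAp] by simp
  finally have R: "xP k (\<lambda>j. chi r k w j - chiM r s k w j) = int (card Ap) - int (card Bp)" .
  have "int (codim_cell r k w) = int (card Ap)"
    unfolding codim_cell_def dimL using cA unfolding A_def Aset_def by simp
  moreover have "int (codim_cellM r s k w) = int (card Bp)"
    unfolding codim_cellM_def dimM using cB unfolding B_def by simp
  ultimately show ?thesis using R by simp
qed

end
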